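(* Let $\delta>0$, let $T$ be a positive integer, and let $\Gamma$ be $\beta$-regular with constants $0<c_0<C_0$. Then $$\mathbb{E}_\Gamma\Bigl[\mathbf 1(\mu<1-3\delta)\min\Bigl(1+\frac{1}{1-2\delta-\mu},\,T(1-\mu)\Bigr)\Bigr]\le C_0\cdot\begin{cases}5+\log(1/\delta),&\beta=1,\\ C(\beta),&\beta>1,\\ C(\beta)\min(\sqrt T,1/\delta)^{1-\beta},&\beta<1,\end{cases}$$ where $C(\beta)$ is a constant depending only on $\beta$.
   Context: A distribution $\Gamma$ on $[0,1]$ is $\beta$-regular if there exist constants $0<c_0<C_0$ such that $c_0\epsilon^\beta\le\mathbb{P}_\Gamma(\mu>1-\epsilon)\le\mathbb{P}_\Gamma(\mu\ge1-\epsilon)\le C_0\epsilon^\beta$ for all $\epsilon\in(0,1]$. $\mathbb{E}_\Gamma$ denotes expectation over $\mu\sim\Gamma$. *)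

theory Defs
  imports "HOL-Probability.Probability"
begin

definition distribution_on_unit :: "real measure \<Rightarrow> bool" where
  "distribution_on_unit \<Gamma> \<longleftrightarrow>
     prob_space \<Gamma> \<and> sets \<Gamma> = sets borel \<and> measure \<Gamma> {0..1} = 1"

definition beta_regular :: "real measure \<Rightarrow> real \<Rightarrow> real \<Rightarrow> real \<Rightarrow> bool" where
  "beta_regular \<Gamma> \<beta> c0 C0 \<longleftrightarrow>
     distribution_on_unit \<Gamma> \<and> 0 < c0 \<and> c0 < C0 \<and>
     (\<forall>\<epsilon>\<in>{0<..1}.
        c0 * \<epsilon> powr \<beta> \<le> measure \<Gamma> {\<mu>. \<mu> > 1 - \<epsilon>} \<and>
        measure \<Gamma> {\<mu>. \<mu> > 1 - \<epsilon>} \<le> measure \<Gamma> {\<mu>. \<mu> \<ge> 1 - \<epsilon>} \<and>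
        measure \<Gamma> {\<mu>. \<mu> \<ge> 1 - \<epsilon>} \<le> C0 * \<epsilon> powr \<beta>)"

end

theory Submission
  imports Defs
begin

lemma key:
  fixes \<Gamma> :: "real measure" and w f :: "real \<Rightarrow> real"
  assumes P: "prob_space \<Gamma>" "sets \<Gamma> = sets borel"
  and tail: "\<And>t. 0 < t \<Longrightarrow> t < 1 \<Longrightarrow> measure \<Gamma> {\<mu>. \<mu> > 1 - t} \<le> C0 * t powr \<beta>"
  and wm: "w \<in> borel_measurable borel" and w0: "\<And>t. 0 \<le> w t"
  and wz: "\<And>t. t \<le> 0 \<Longrightarrow> w t = 0" "\<And>t. 1 \<le> t \<Longrightarrow> w t = 0"
  and f: "AE \<mu> in \<Gamma>. ennreal (f \<mu>) \<le> ennreal A + (\<integral>\<^sup>+t. ennreal (w t) * indicator {1-\<mu><..<1} t \<partial>lborel)"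
  and A: "0 \<le> A"
  shows "(\<integral>\<^sup>+\<mu>. ennreal (f \<mu>) \<partial>\<Gamma>) \<le> ennreal A + (\<integral>\<^sup>+t. ennreal (w t * C0 * t powr \<beta>) \<partial>lborel)"
proof -
  interpret prob_space \<Gamma> by (rule P(1))
  interpret pair_sigma_finite \<Gamma> lborel
    by (simp add: pair_sigma_finite.intro prob_space_imp_sigma_finite[OF P(1)] sigma_finite_lborel)
  have sp: "space \<Gamma> = UNIV" using sets_eq_imp_space_eq[OF P(2)] by simp
  let ?h = "\<lambda>\<mu> t. ennreal (w t) * indicator {1-\<mu><..<1} t"
  have hm: "case_prod ?h \<in> borel_measurable (\<Gamma> \<Otimes>\<^sub>M lborel)"
  proof -
    have "case_prod ?h \<in> borel_measurable (borel \<Otimes>\<^sub>M borel)"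
    proof -
      have "(\<lambda>p::real\<times>real. ennreal (w (snd p)) * indicator {p. 1 - fst p < snd p \<and> snd p < 1} p) \<in> borel_measurable (borel \<Otimes>\<^sub>M borel)"
        using wm by measurable
      moreover have "(\<lambda>p::real\<times>real. ennreal (w (snd p)) * indicator {p. 1 - fst p < snd p \<and> snd p < 1} p) = case_prod ?h"
        by (auto simp: fun_eq_iff indicator_def)
      ultimately show ?thesis by simp
    qed
    then show ?thesis
      by (subst measurable_cong_sets[OF sets_pair_measure_cong[OF P(2) sets_lborel] refl]) 
  qed
  have Gm: "(\<lambda>\<mu>. \<integral>\<^sup>+t. ?h \<mu> t \<partial>lborel) \<in> borel_measurable \<Gamma>"
    using lborel.borel_measurable_nn_integral[OF hm] by simp
  have "(\<integral>\<^sup>+\<mu>. ennreal (f \<mu>) \<partial>\<Gamma>) \<le> (\<integral>\<^sup>+\<mu>. ennreal A + (\<integral>\<^sup>+t. ?h \<mu> t \<partial>lborel) \<partial>\<Gamma>)"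
    by (rule nn_integral_mono_AE[OF f])
  also have "\<dots> = (\<integral>\<^sup>+\<mu>. ennreal A \<partial>\<Gamma>) + (\<integral>\<^sup>+\<mu>. (\<integral>\<^sup>+t. ?h \<mu> t \<partial>lborel) \<partial>\<Gamma>)"
    by (rule nn_integral_add) (use Gm in auto)
  also have "(\<integral>\<^sup>+\<mu>. ennreal A \<partial>\<Gamma>) = ennreal A"
    by (simp add: emeasure_space_1)
  also have "(\<integral>\<^sup>+\<mu>. (\<integral>\<^sup>+t. ?h \<mu> t \<partial>lborel) \<partial>\<Gamma>) = (\<integral>\<^sup>+t. (\<integral>\<^sup>+\<mu>. ?h \<mu> t \<partial>\<Gamma>) \<partial>lborel)"
    using Fubini'[OF hm] by simp
  also have "\<dots> \<le> (\<integral>\<^sup>+t. ennreal (w t * C0 * t powr \<beta>) \<partial>lborel)"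
  proof (rule nn_integral_mono)
    fix t :: real
    show "(\<integral>\<^sup>+\<mu>. ?h \<mu> t \<partial>\<Gamma>) \<le> ennreal (w t * C0 * t powr \<beta>)"
    proof (cases "0 < t \<and> t < 1")
      case True
      have "(\<integral>\<^sup>+\<mu>. ?h \<mu> t \<partial>\<Gamma>) = (\<integral>\<^sup>+\<mu>. ennreal (w t) * indicator {1-t<..} \<mu> \<partial>\<Gamma>)"
        using True by (intro nn_integral_cong) (auto simp: indicator_def)
      also have "\<dots> = ennreal (w t) * emeasure \<Gamma> {1-t<..}"
        by (rule nn_integral_cmult_indicator) (simp add: P(2))
      also have "emeasure \<Gamma> {1-t<..} = ennreal (measure \<Gamma> {\<mu>. \<mu> > 1 - t})"
        by (simp add: emeasure_eq_measure greaterThan_def)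
      also have "ennreal (w t) * ennreal (measure \<Gamma> {\<mu>. \<mu> > 1 - t}) \<le> ennreal (w t) * ennreal (C0 * t powr \<beta>)"
        by (intro mult_left_mono ennreal_leI tail) (use True in auto)
      also have "\<dots> = ennreal (w t * C0 * t powr \<beta>)"
        by (subst mult.assoc, rule ennreal_mult'[OF w0, symmetric])
      finally show ?thesis .
    next
      case False
      then have "w t = 0" using wz by force
      then show ?thesis by simp
    qed
  qed
  finally show ?thesis by (simp add: add_left_mono)
qed

lemma ftc_nn:
  fixes F g :: "real \<Rightarrow> real"
  assumes ab: "a \<le> b" and d: "\<And>t. a \<le> t \<Longrightarrow> t \<le> b \<Longrightarrow> (F has_real_derivative g t) (at t)"
    and nn: "\<And>t. a < t \<Longrightarrow> t < b \<Longrightarrow> 0 \<le> g t"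
  shows "(\<integral>\<^sup>+t. ennreal (g t) * indicator {a<..<b} t \<partial>lborel) = ennreal (F b - F a)"
proof -
  have "(g has_integral F b - F a) {a..b}"
  proof (rule fundamental_theorem_of_calculus[OF ab])
    fix x assume "x \<in> {a..b}"
    then have "(F has_real_derivative g x) (at x)" using d by auto
    then have "(F has_real_derivative g x) (at x within {a..b})" by (rule has_field_derivative_at_within)
    then show "(F has_vector_derivative g x) (at x within {a..b})"
      by (simp add: has_real_derivative_iff_has_vector_derivative)
  qed
  then have "(g has_integral F b - F a) {a<..<b}" by (simp add: has_integral_Icc_iff_Ioo)
  then show ?thesis by (intro nn_integral_has_integral_lebesgue') (use nn in auto)
qed

lemma deriv1: "t - 2*\<delta> \<noteq> (0::real) \<Longrightarrow> ((\<lambda>t. -1/(t-2*\<delta>)) has_real_derivative 1/(t-2*\<delta>)^2) (at t)"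
  by (rule derivative_eq_intros refl | simp add: power2_eq_square)+

definition fI :: "real \<Rightarrow> nat \<Rightarrow> real \<Rightarrow> real" where
  "fI \<delta> T \<mu> = indicator {..<1 - 3 * \<delta>} \<mu> * min (1 + 1 / (1 - 2 * \<delta> - \<mu>)) (real T * (1 - \<mu>))"

lemma case_ge1_pointwise:
  fixes \<delta> :: real
  assumes d: "0 < \<delta>" "\<delta> < 1/3" and mu: "\<mu> \<in> {0..1}"
  defines "w1 \<equiv> \<lambda>t::real. if 3*\<delta> < t \<and> t < 1 then 1/(t-2*\<delta>)^2 else 0"
  shows "ennreal (fI \<delta> T \<mu>) \<le> ennreal (1 + 1/(1-2*\<delta>)) + (\<integral>\<^sup>+t. ennreal (w1 t) * indicator {1-\<mu><..<1} t \<partial>lborel)"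
proof (cases "\<mu> < 1 - 3*\<delta>")
  case False
  then have "fI \<delta> T \<mu> = 0" by (simp add: fI_def)
  then show ?thesis by simp
next
  case True
  define x where "x = 1 - \<mu>"
  have x: "3*\<delta> < x" "x \<le> 1" using True mu by (auto simp: x_def)
  have "(\<integral>\<^sup>+t. ennreal (w1 t) * indicator {1-\<mu><..<1} t \<partial>lborel)
      = (\<integral>\<^sup>+t. ennreal (1/(t-2*\<delta>)^2) * indicator {x<..<1} t \<partial>lborel)"
    using x by (intro nn_integral_cong) (auto simp: w1_def x_def indicator_def)
  also have "\<dots> = ennreal ((-1/(1-2*\<delta>)) - (-1/(x-2*\<delta>)))"
  proof (rule ftc_nn)
    fix t assume t: "x \<le> t" "t \<le> 1"
    have "t - 2*\<delta> \<noteq> 0" using t x d by auto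
    then show "((\<lambda>t. -1/(t-2*\<delta>)) has_real_derivative 1/(t-2*\<delta>)^2) (at t)"
      by (rule deriv1)
  qed (use x in auto)
  finally have I: "(\<integral>\<^sup>+t. ennreal (w1 t) * indicator {1-\<mu><..<1} t \<partial>lborel) = ennreal (1/(x-2*\<delta>) - 1/(1-2*\<delta>))"
    by simp
  have fx: "fI \<delta> T \<mu> \<le> 1 + 1/(x-2*\<delta>)"
  proof -
    have e: "1 - 2*\<delta> - \<mu> = x - 2*\<delta>" by (simp add: x_def)
    have "fI \<delta> T \<mu> = min (1 + 1 / (1 - 2 * \<delta> - \<mu>)) (real T * (1 - \<mu>))"
      using True by (simp add: fI_def)
    then show ?thesis unfolding e by simp
  qed
  have p1: "0 \<le> 1 + 1/(1-2*\<delta>)" using d by auto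
  have p2: "0 \<le> 1/(x-2*\<delta>) - 1/(1-2*\<delta>)" using d x by (auto intro!: divide_left_mono)
  have "ennreal (fI \<delta> T \<mu>) \<le> ennreal ((1 + 1/(1-2*\<delta>)) + (1/(x-2*\<delta>) - 1/(1-2*\<delta>)))"
    using fx by (intro ennreal_leI) simp
  also have "\<dots> = ennreal (1 + 1/(1-2*\<delta>)) + ennreal (1/(x-2*\<delta>) - 1/(1-2*\<delta>))"
    using p1 p2 by (rule ennreal_plus)
  finally show ?thesis using I by simp
qed

lemma aux2: "u > (0::real) \<Longrightarrow> (1/u + d/(u*u)) * C0 = C0*(u+d)/u^2"
  by (simp add: field_simps power2_eq_square)
lemma deriv2: "t - 2*\<delta> > (0::real) \<Longrightarrow>
  ((\<lambda>t. C0*(ln(t-2*\<delta>) - 2*\<delta>/(t-2*\<delta>))) has_real_derivative C0*t/(t-2*\<delta>)^2) (at t)"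
  apply (rule derivative_eq_intros refl | simp)+
  using aux2[of "t-2*\<delta>" "2*\<delta>" C0] by simp

lemma deriv3: "t > (0::real) \<Longrightarrow> \<gamma> \<noteq> 0 \<Longrightarrow>
  ((\<lambda>t. K/\<gamma> * t powr \<gamma>) has_real_derivative K * t powr (\<gamma> - 1)) (at t)"
  by (auto intro!: derivative_eq_intros)

lemma deriv4: "t > (0::real) \<Longrightarrow> ((\<lambda>t. -3/t) has_real_derivative 3/t^2) (at t)"
  by (auto intro!: derivative_eq_intros simp: field_simps power2_eq_square)

lemma det_beta1:
  fixes \<delta> C0 :: real
  assumes d: "0 < \<delta>" "\<delta> < 1/3" and C0: "0 \<le> C0"
  defines "w1 \<equiv> \<lambda>t::real. if 3*\<delta> < t \<and> t < 1 then 1/(t-2*\<delta>)^2 else 0"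
  shows "(\<integral>\<^sup>+t. ennreal (w1 t * C0 * t powr 1) \<partial>lborel)
     = ennreal (C0*(ln(1-2*\<delta>) - 2*\<delta>/(1-2*\<delta>)) - C0*(ln(3*\<delta>-2*\<delta>) - 2*\<delta>/(3*\<delta>-2*\<delta>)))"
proof -
  have "(\<integral>\<^sup>+t. ennreal (w1 t * C0 * t powr 1) \<partial>lborel)
     = (\<integral>\<^sup>+t. ennreal (C0*t/(t-2*\<delta>)^2) * indicator {3*\<delta><..<1} t \<partial>lborel)"
    using d by (intro nn_integral_cong) (auto simp: w1_def indicator_def)
  also have "\<dots> = ennreal (C0*(ln(1-2*\<delta>) - 2*\<delta>/(1-2*\<delta>)) - C0*(ln(3*\<delta>-2*\<delta>) - 2*\<delta>/(3*\<delta>-2*\<delta>)))"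
    by (rule ftc_nn[where F="\<lambda>t. C0*(ln(t-2*\<delta>) - 2*\<delta>/(t-2*\<delta>))"])
       (use d C0 in \<open>auto intro!: deriv2\<close>)
  finally show ?thesis .
qed

lemma det_beta_gt1:
  fixes \<delta> C0 :: real
  assumes d: "0 < \<delta>" "\<delta> < 1/3" and C0: "0 \<le> C0" and b: "1 < \<beta>"
  defines "w1 \<equiv> \<lambda>t::real. if 3*\<delta> < t \<and> t < 1 then 1/(t-2*\<delta>)^2 else 0"
  shows "(\<integral>\<^sup>+t. ennreal (w1 t * C0 * t powr \<beta>) \<partial>lborel) \<le> ennreal (9*C0/(\<beta>-1))"
proof -
  have "(\<integral>\<^sup>+t. ennreal (w1 t * C0 * t powr \<beta>) \<partial>lborel)
     \<le> (\<integral>\<^sup>+t. ennreal (9*C0 * t powr (\<beta>-2)) * indicator {3*\<delta><..<1} t \<partial>lborel)"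
  proof (intro nn_integral_mono)
    fix t :: real
    show "ennreal (w1 t * C0 * t powr \<beta>) \<le> ennreal (9*C0 * t powr (\<beta>-2)) * indicator {3*\<delta><..<1} t"
    proof (cases "3*\<delta> < t \<and> t < 1")
      case True
      then have t: "0 < t" "t \<le> 3*(t-2*\<delta>)" using d by auto
      have "t^2 \<le> (3*(t-2*\<delta>))^2" using t by (intro power_mono) auto
      also have "(3*(t-2*\<delta>))^2 = 9*(t-2*\<delta>)^2" unfolding power_mult_distrib by simp
      finally have "t^2 \<le> 9*(t-2*\<delta>)^2" .
      then have q: "t^2 / (t-2*\<delta>)^2 \<le> 9" using t by (simp add: divide_le_eq)
      have pe: "t powr \<beta> = t powr (\<beta>-2) * t^2"
        using t by (simp add: powr_diff powr_numeral)
      have "w1 t * C0 * t powr \<beta> = (C0 * t powr (\<beta>-2)) * (t^2 / (t-2*\<delta>)^2)"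
        using True by (simp add: w1_def pe)
      also have "\<dots> \<le> (C0 * t powr (\<beta>-2)) * 9"
        using q C0 by (intro mult_left_mono) auto
      finally have "ennreal (w1 t * C0 * t powr \<beta>) \<le> ennreal (9*C0 * t powr (\<beta>-2))"
        by (intro ennreal_leI) (simp add: mult_ac)
      then show ?thesis using True by (simp add: indicator_def)
    next
      case False
      then have "w1 t = 0" unfolding w1_def by auto
      then show ?thesis by simp
    qed
  qed
  also have "\<dots> = ennreal (9*C0/(\<beta>-1) * 1 powr (\<beta>-1) - 9*C0/(\<beta>-1) * (3*\<delta>) powr (\<beta>-1))"
  proof (rule ftc_nn[where F="\<lambda>t. 9*C0/(\<beta>-1) * t powr (\<beta>-1)"])
    fix t assume "3*\<delta> \<le> t" "t \<le> 1"
    then have "t > 0" using d by auto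
    from deriv3[OF this, of "\<beta>-1" "9*C0"] b
    show "((\<lambda>t. 9*C0/(\<beta>-1) * t powr (\<beta>-1)) has_real_derivative 9*C0 * t powr (\<beta>-2)) (at t)"
      by (simp add: algebra_simps)
  qed (use d C0 in auto)
  also have "\<dots> \<le> ennreal (9*C0/(\<beta>-1))"
    using b C0 d by (intro ennreal_leI) (simp add: mult_nonneg_nonneg)
  finally show ?thesis .
qed

lemma det_beta_lt1:
  fixes b C0 :: real
  assumes bp: "0 < b" and C0: "0 \<le> C0" and be: "\<beta> < 1"
  defines "w2 \<equiv> \<lambda>t::real. if b < t \<and> t < 1 then 3/t^2 else 0"
  shows "(\<integral>\<^sup>+t. ennreal (w2 t * C0 * t powr \<beta>) \<partial>lborel) \<le> ennreal (3*C0 * b powr (\<beta>-1) / (1-\<beta>))"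
proof (cases "b < 1")
  case False
  then have "\<And>t. w2 t = 0" by (auto simp: w2_def)
  then show ?thesis by simp
next
  case True
  have "(\<integral>\<^sup>+t. ennreal (w2 t * C0 * t powr \<beta>) \<partial>lborel)
      = (\<integral>\<^sup>+t. ennreal (3*C0 * t powr (\<beta>-2)) * indicator {b<..<1} t \<partial>lborel)"
  proof (intro nn_integral_cong)
    fix t :: real
    show "ennreal (w2 t * C0 * t powr \<beta>) = ennreal (3*C0 * t powr (\<beta>-2)) * indicator {b<..<1} t"
    proof (cases "b < t \<and> t < 1")
      case True
      then have t: "0 < t" using bp by auto
      have "t powr (\<beta>-2) = t powr \<beta> / t^2" using t by (simp add: powr_diff powr_numeral)
      then have eq: "w2 t * C0 * t powr \<beta> = 3*C0 * t powr (\<beta>-2)" using True by (simp add: w2_def)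
      show ?thesis unfolding eq using True by (simp add: indicator_def)
    next
      case False
      then have "w2 t = 0" unfolding w2_def by auto
      then show ?thesis using False by simp
    qed
  qed
  also have "\<dots> = ennreal (3*C0/(\<beta>-1) * 1 powr (\<beta>-1) - 3*C0/(\<beta>-1) * b powr (\<beta>-1))"
  proof (rule ftc_nn[where F="\<lambda>t. 3*C0/(\<beta>-1) * t powr (\<beta>-1)"])
    fix t assume "b \<le> t" "t \<le> 1"
    then have "t > 0" using bp by auto
    from deriv3[OF this, of "\<beta>-1" "3*C0"] be
    show "((\<lambda>t. 3*C0/(\<beta>-1) * t powr (\<beta>-1)) has_real_derivative 3*C0 * t powr (\<beta>-2)) (at t)"
      by (simp add: algebra_simps)
  qed (use True C0 in auto)
  also have "\<dots> \<le> ennreal (3*C0 * b powr (\<beta>-1) / (1-\<beta>))"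
  proof (intro ennreal_leI)
    have "3*C0/(\<beta>-1) * 1 powr (\<beta>-1) - 3*C0/(\<beta>-1) * b powr (\<beta>-1)
        = 3*C0 * b powr (\<beta>-1) / (1-\<beta>) - 3*C0/(1-\<beta>)"
      using be by (simp add: field_simps)
    also have "\<dots> \<le> 3*C0 * b powr (\<beta>-1) / (1-\<beta>)" using be C0 by simp
    finally show "3*C0/(\<beta>-1) * 1 powr (\<beta>-1) - 3*C0/(\<beta>-1) * b powr (\<beta>-1) \<le> 3*C0 * b powr (\<beta>-1) / (1-\<beta>)" .
  qed
  finally show ?thesis .
qed

lemma real_bound_lt1:
  fixes x \<delta> :: real and T :: nat
  assumes d: "0 < \<delta>" and x: "3*\<delta> < x" and T: "0 < T"
  defines "M \<equiv> min (sqrt (real T)) (1/\<delta>)"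
  defines "b \<equiv> 3/(2*M)"
  shows "min (1 + 1/(x-2*\<delta>)) (real T * x) \<le> 1 + 3/max x b"
proof -
  have xp: "0 < x" using d x by auto
  have Mp: "0 < M" using d T by (simp add: M_def)
  have h1: "1/(x-2*\<delta>) \<le> 3/x" using d x xp by (simp add: divide_simps)
  have h2: "1/(x-2*\<delta>) \<le> 1/\<delta>" using d x by (intro divide_left_mono) auto
  show ?thesis
  proof (cases "b \<le> x")
    case True
    then show ?thesis using h1 by (simp add: max_def)
  next
    case False
    then have mb: "max x b = b" by simp
    have e: "3/b = 2*M" using Mp by (simp add: b_def)
    show ?thesis
    proof (cases "1/\<delta> \<le> sqrt (real T)")
      case True
      then have "M = 1/\<delta>" by (simp add: M_def)
      moreover have "1/\<delta> \<le> 2/\<delta>" using d by (intro divide_right_mono) auto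
      ultimately have "1/(x-2*\<delta>) \<le> 3/b" using h2 by (simp add: e)
      then show ?thesis by (simp add: mb min_le_iff_disj)
    next
      case False2: False
      then have M: "M = sqrt (real T)" by (simp add: M_def)
      have sT: "0 < sqrt (real T)" using T by simp
      have "x < 3/(2* sqrt (real T))" using False by (simp add: b_def M)
      then have "real T * x \<le> real T * (3/(2* sqrt (real T)))" using T by (intro mult_left_mono) auto
      also have "real T * (3/(2* sqrt (real T))) = 3/2 * sqrt (real T)"
        using sT by (simp add: field_simps)
      finally have "real T * x \<le> 3/2 * sqrt (real T)" .
      moreover have "1 + 3/b = 1 + 2 * sqrt (real T)" by (simp add: e M)
      ultimately have "real T * x \<le> 1 + 3/b" using sT by linarith
      then show ?thesis by (simp add: mb min_le_iff_disj)
    qed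
  qed
qed

lemma case_lt1_pointwise:
  fixes \<delta> :: real and T :: nat
  assumes d: "0 < \<delta>" "\<delta> < 1/3" and mu: "\<mu> \<in> {0..1}" and T: "0 < T"
  defines "b \<equiv> 3/(2*min (sqrt (real T)) (1/\<delta>))"
  defines "w2 \<equiv> \<lambda>t::real. if b < t \<and> t < 1 then 3/t^2 else 0"
  shows "ennreal (fI \<delta> T \<mu>) \<le> ennreal 4 + (\<integral>\<^sup>+t. ennreal (w2 t) * indicator {1-\<mu><..<1} t \<partial>lborel)"
proof (cases "\<mu> < 1 - 3*\<delta>")
  case False
  then have "fI \<delta> T \<mu> = 0" by (simp add: fI_def)
  then show ?thesis by simp
next
  case True
  define x where "x = 1 - \<mu>"
  have x: "3*\<delta> < x" "x \<le> 1" using True mu by (auto simp: x_def)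
  have bp: "0 < b" using d T by (simp add: b_def)
  have fb: "fI \<delta> T \<mu> \<le> 1 + 3/max x b"
  proof -
    have e: "1 - 2*\<delta> - \<mu> = x - 2*\<delta>" by (simp add: x_def)
    have "fI \<delta> T \<mu> = min (1 + 1 / (1 - 2 * \<delta> - \<mu>)) (real T * (1 - \<mu>))"
      using True by (simp add: fI_def)
    also have "\<dots> = min (1 + 1/(x-2*\<delta>)) (real T * x)" unfolding e by (simp add: x_def)
    also have "\<dots> \<le> 1 + 3/max x b" unfolding b_def by (rule real_bound_lt1[OF d(1) x(1) T])
    finally show ?thesis .
  qed
  show ?thesis
  proof (cases "b < 1")
    case False
    then have "3/max x b \<le> 3" by (simp add: divide_le_eq le_max_iff_disj)
    then have "ennreal (fI \<delta> T \<mu>) \<le> ennreal 4" using fb by (intro ennreal_leI) simp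
    then show ?thesis by (rule order.trans) simp
  next
    case b1: True
    define y where "y = max x b"
    have y: "b \<le> y" "x \<le> y" "y \<le> 1" "0 < y" using b1 x bp by (auto simp: y_def)
    have "(\<integral>\<^sup>+t. ennreal (3/t^2) * indicator {y<..<1} t \<partial>lborel) = ennreal ((-3/1) - (-3/y))"
    proof (rule ftc_nn)
      fix t assume "y \<le> t" "t \<le> 1"
      then have "0 < t" using y by auto
      then show "((\<lambda>t. -3/t) has_real_derivative 3/t^2) (at t)" by (rule deriv4)
    qed (use y in auto)
    then have I: "ennreal (3/y - 3) = (\<integral>\<^sup>+t. ennreal (3/t^2) * indicator {y<..<1} t \<partial>lborel)" by simp
    also have "\<dots> \<le> (\<integral>\<^sup>+t. ennreal (w2 t) * indicator {1-\<mu><..<1} t \<partial>lborel)"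
    proof (rule nn_integral_mono)
      fix t :: real
      show "ennreal (3/t^2) * indicator {y<..<1} t \<le> ennreal (w2 t) * indicator {1-\<mu><..<1} t"
        using y by (auto simp: indicator_def w2_def x_def)
    qed
    finally have I2: "ennreal (3/y - 3) \<le> (\<integral>\<^sup>+t. ennreal (w2 t) * indicator {1-\<mu><..<1} t \<partial>lborel)" .
    have p: "0 \<le> 3/y - 3" using y by (simp add: divide_simps)
    have "ennreal (fI \<delta> T \<mu>) \<le> ennreal (4 + (3/y - 3))" using fb by (intro ennreal_leI) (simp add: y_def)
    also have "\<dots> = ennreal 4 + ennreal (3/y - 3)" using p by (intro ennreal_plus) auto
    also have "\<dots> \<le> ennreal 4 + (\<integral>\<^sup>+t. ennreal (w2 t) * indicator {1-\<mu><..<1} t \<partial>lborel)"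
      using I2 by (rule add_left_mono)
    finally show ?thesis .
  qed
qed

theorem lemma9:
  fixes \<beta> :: real
  shows "\<exists>C::real. \<forall>(\<Gamma>::real measure) c0 C0 (\<delta>::real) (T::nat).
    beta_regular \<Gamma> \<beta> c0 C0 \<longrightarrow> 0 < \<delta> \<longrightarrow> \<delta> < 1 \<longrightarrow> 0 < T \<longrightarrow>
    (\<integral>\<mu>. indicator {..<1 - 3 * \<delta>} \<mu> *
           min (1 + 1 / (1 - 2 * \<delta> - \<mu>)) (real T * (1 - \<mu>)) \<partial>\<Gamma>)
    \<le> C0 * (if \<beta> = 1 then 5 + ln (1 / \<delta>)
             else if \<beta> > 1 then C
             else C * min (sqrt (real T)) (1 / \<delta>) powr (1 - \<beta>))"
proof -
  define C where "C = (if \<beta> > 1 then 4 + 9/(\<beta>-1) else 4 + 3/(1-\<beta>))"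
  have Cnn: "\<beta> \<noteq> 1 \<Longrightarrow> 0 \<le> C" by (auto simp: C_def)
  show ?thesis
  proof (intro exI[of _ C] allI impI)
    fix \<Gamma> :: "real measure" and c0 C0 \<delta> :: real and T :: nat
    assume reg: "beta_regular \<Gamma> \<beta> c0 C0" and d0: "0 < \<delta>" and d1: "\<delta> < 1" and T: "0 < T"
    from reg have P: "prob_space \<Gamma>" "sets \<Gamma> = sets borel" "measure \<Gamma> {0..1} = 1"
      and tailall: "\<forall>\<epsilon>\<in>{0<..1}.
        c0 * \<epsilon> powr \<beta> \<le> measure \<Gamma> {\<mu>. \<mu> > 1 - \<epsilon>} \<and>
        measure \<Gamma> {\<mu>. \<mu> > 1 - \<epsilon>} \<le> measure \<Gamma> {\<mu>. \<mu> \<ge> 1 - \<epsilon>} \<and>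
        measure \<Gamma> {\<mu>. \<mu> \<ge> 1 - \<epsilon>} \<le> C0 * \<epsilon> powr \<beta>"
      unfolding beta_regular_def distribution_on_unit_def by auto
    interpret prob_space \<Gamma> by (rule P(1))
    have tail: "\<And>t. 0 < t \<Longrightarrow> t < 1 \<Longrightarrow> measure \<Gamma> {\<mu>. \<mu> > 1 - t} \<le> C0 * t powr \<beta>"
    proof -
      fix t :: real assume "0 < t" "t < 1"
      then have "t \<in> {0<..1}" by auto
      from bspec[OF tailall this]
      show "measure \<Gamma> {\<mu>. \<mu> > 1 - t} \<le> C0 * t powr \<beta>" by linarith
    qed
    have C0ge: "1 \<le> C0"
    proof -
      have "(1::real) \<in> {0<..1}" by simp
      from bspec[OF tailall this]
      have "measure \<Gamma> {\<mu>. \<mu> \<ge> 1 - 1} \<le> C0 * 1 powr \<beta>" by linarith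
      then have a: "measure \<Gamma> {\<mu>. \<mu> \<ge> 0} \<le> C0" by simp
      have "measure \<Gamma> {0..1} \<le> measure \<Gamma> {\<mu>. \<mu> \<ge> 0}"
        by (rule finite_measure_mono) (auto simp: P(2) atLeast_def[symmetric])
      then show ?thesis using a P(3) by simp
    qed
    have AE01: "AE \<mu> in \<Gamma>. \<mu> \<in> {0..1}" by (rule AE_prob_1) (use P(3) in simp)
    define M where "M = min (sqrt (real T)) (1/\<delta>)"
    define R where "R = (if \<beta> = 1 then 5 + ln (1 / \<delta>) else if \<beta> > 1 then C
             else C * M powr (1 - \<beta>))"
    have Rnn: "0 \<le> R"
    proof -
      have "0 \<le> ln (1/\<delta>)" using d0 d1 by simp
      then show ?thesis using Cnn by (auto simp: R_def)
    qed
    have main: "(\<integral>\<^sup>+\<mu>. ennreal (fI \<delta> T \<mu>) \<partial>\<Gamma>) \<le> ennreal (C0 * R)"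
    proof (cases "\<delta> < 1/3")
      case False
      have ae0: "AE \<mu> in \<Gamma>. ennreal (fI \<delta> T \<mu>) = 0"
        using AE01 by eventually_elim (use False in \<open>auto simp: fI_def\<close>)
      then have "(\<integral>\<^sup>+\<mu>. ennreal (fI \<delta> T \<mu>) \<partial>\<Gamma>) = 0"
        by (subst nn_integral_cong_AE[OF ae0]) simp
      then show ?thesis by simp
    next
      case d3: True
      have d: "0 < \<delta>" "\<delta> < 1/3" using d0 d3 by auto
      have C0nn: "0 \<le> C0" using C0ge by simp
      define w1 where "w1 = (\<lambda>t::real. if 3*\<delta> < t \<and> t < 1 then 1/(t-2*\<delta>)^2 else 0)"
      define A where "A = 1 + 1/(1-2*\<delta>)"
      have An: "0 \<le> A" "A \<le> 4" using d by (auto simp: A_def divide_simps)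
      have key1: "(\<integral>\<^sup>+\<mu>. ennreal (fI \<delta> T \<mu>) \<partial>\<Gamma>) \<le> ennreal A + (\<integral>\<^sup>+t. ennreal (w1 t * C0 * t powr \<beta>) \<partial>lborel)"
      proof (rule key[OF P(1,2) tail])
        show "w1 \<in> borel_measurable borel" unfolding w1_def by measurable
        show "\<And>t. 0 \<le> w1 t" by (simp add: w1_def)
        show "\<And>t. t \<le> 0 \<Longrightarrow> w1 t = 0" using d by (simp add: w1_def)
        show "\<And>t. 1 \<le> t \<Longrightarrow> w1 t = 0" by (simp add: w1_def)
        show "AE \<mu> in \<Gamma>. ennreal (fI \<delta> T \<mu>) \<le> ennreal A + (\<integral>\<^sup>+t. ennreal (w1 t) * indicator {1-\<mu><..<1} t \<partial>lborel)"
          using AE01 by eventually_elim (unfold A_def w1_def, rule case_ge1_pointwise[OF d])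
      qed (use An in auto)
      consider (eq) "\<beta> = 1" | (gt) "\<beta> > 1" | (lt) "\<beta> < 1" by linarith
      then show ?thesis
      proof cases
        case eq
        define V where "V = C0*(ln(1-2*\<delta>) - 2*\<delta>/(1-2*\<delta>)) - C0*(ln(3*\<delta>-2*\<delta>) - 2*\<delta>/(3*\<delta>-2*\<delta>))"
        have I: "(\<integral>\<^sup>+t. ennreal (w1 t * C0 * t powr \<beta>) \<partial>lborel) = ennreal V"
          unfolding eq V_def w1_def by (rule det_beta1[OF d C0nn])
        define q where "q = 2*\<delta>/(1-2*\<delta>)"
        have q: "0 \<le> q" "q < 2" "1/(1-2*\<delta>) = 1 + q" using d by (auto simp: q_def divide_simps)
        have l1: "ln (1-2*\<delta>) \<le> 0" using d by simp
        have l2: "ln \<delta> < ln (1-2*\<delta>)" using d by simp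
        have e3: "3*\<delta>-2*\<delta> = \<delta>" "2*\<delta>/\<delta> = 2" using d by auto
        have lninv: "ln (1/\<delta>) = - ln \<delta>" using d by (simp add: ln_div)
        have V: "V = C0 * ln(1-2*\<delta>) - C0 * ln \<delta> + 2*C0 - C0 * q"
          unfolding V_def q_def[symmetric] e3 by (simp add: algebra_simps)
        have Vn: "0 \<le> V"
        proof -
          have "C0 * ln \<delta> \<le> C0 * ln(1-2*\<delta>)" using C0nn l2 by (intro mult_left_mono) auto
          moreover have "C0 * q \<le> C0 * 2" using C0nn q by (intro mult_left_mono) auto
          ultimately show ?thesis unfolding V by linarith
        qed
        have c1: "C0 * ln (1-2*\<delta>) \<le> 0" using C0nn l1 by (simp add: mult_nonneg_nonpos)
        have c2: "q \<le> C0 * q" using C0ge q by (simp add: mult_right_mono[of 1 C0 q, simplified])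
        have "A + V \<le> C0 * R"
        proof -
          have r: "C0 * R = 5*C0 - C0 * ln \<delta>" using eq lninv by (simp add: R_def algebra_simps)
          have a: "A = 2 + q" using q(3) by (simp add: A_def)
          show ?thesis unfolding r a V using c1 c2 C0ge by linarith
        qed
        then have "ennreal (A + V) \<le> ennreal (C0 * R)" by (rule ennreal_leI)
        moreover have "ennreal A + ennreal V = ennreal (A + V)" using An Vn by (simp add: ennreal_plus)
        ultimately show ?thesis using key1 I by simp
      next
        case gt
        have I: "(\<integral>\<^sup>+t. ennreal (w1 t * C0 * t powr \<beta>) \<partial>lborel) \<le> ennreal (9*C0/(\<beta>-1))"
          unfolding w1_def by (rule det_beta_gt1[OF d C0nn gt])
        have n2: "0 \<le> 9*C0/(\<beta>-1)" using gt C0nn by simp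
        have "A + 9*C0/(\<beta>-1) \<le> C0 * R"
        proof -
          have "R = 4 + 9/(\<beta>-1)" using gt by (simp add: R_def C_def)
          then have "C0 * R = 4*C0 + C0*(9/(\<beta>-1))" by (simp add: distrib_left)
          moreover have "C0*(9/(\<beta>-1)) = 9*C0/(\<beta>-1)" by simp
          ultimately show ?thesis using An C0ge by linarith
        qed
        then have "ennreal (A + 9*C0/(\<beta>-1)) \<le> ennreal (C0 * R)" by (rule ennreal_leI)
        moreover have "ennreal A + ennreal (9*C0/(\<beta>-1)) = ennreal (A + 9*C0/(\<beta>-1))"
          using An n2 by (simp add: ennreal_plus)
        ultimately have "ennreal A + ennreal (9*C0/(\<beta>-1)) \<le> ennreal (C0 * R)" by simp
        have "(\<integral>\<^sup>+\<mu>. ennreal (fI \<delta> T \<mu>) \<partial>\<Gamma>) \<le> ennreal A + ennreal (9*C0/(\<beta>-1))"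
          using key1 I by (rule order.trans[OF _ add_left_mono])
        then show ?thesis using \<open>ennreal A + ennreal (9*C0/(\<beta>-1)) \<le> ennreal (C0 * R)\<close> by (rule order.trans)
      next
        case lt
        define b where "b = 3/(2*M)"
        define w2 where "w2 = (\<lambda>t::real. if b < t \<and> t < 1 then 3/t^2 else 0)"
        have s1: "1 \<le> sqrt (real T)" using T by simp
        have s2: "1 \<le> 1/\<delta>" using d by simp
        have Mge: "1 \<le> M" using s1 s2 by (simp add: M_def)
        have bp: "0 < b" using Mge by (simp add: b_def)
        have key2: "(\<integral>\<^sup>+\<mu>. ennreal (fI \<delta> T \<mu>) \<partial>\<Gamma>) \<le> ennreal (4::real) + (\<integral>\<^sup>+t. ennreal (w2 t * C0 * t powr \<beta>) \<partial>lborel)"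
        proof (rule key[OF P(1,2) tail])
          show "w2 \<in> borel_measurable borel" unfolding w2_def by measurable
          show "\<And>t. 0 \<le> w2 t" by (simp add: w2_def)
          show "\<And>t. t \<le> 0 \<Longrightarrow> w2 t = 0" using bp by (simp add: w2_def)
          show "\<And>t. 1 \<le> t \<Longrightarrow> w2 t = 0" by (simp add: w2_def)
          show "AE \<mu> in \<Gamma>. ennreal (fI \<delta> T \<mu>) \<le> ennreal 4 + (\<integral>\<^sup>+t. ennreal (w2 t) * indicator {1-\<mu><..<1} t \<partial>lborel)"
            using AE01 by eventually_elim (unfold w2_def b_def M_def, rule case_lt1_pointwise[OF d _ T])
        qed auto
        have I: "(\<integral>\<^sup>+t. ennreal (w2 t * C0 * t powr \<beta>) \<partial>lborel) \<le> ennreal (3*C0 * b powr (\<beta>-1) / (1-\<beta>))"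
          unfolding w2_def by (rule det_beta_lt1[OF bp C0nn lt])
        define Pw where "Pw = M powr (1-\<beta>)"
        have Pg: "1 \<le> Pw" unfolding Pw_def by (rule ge_one_powr_ge_zero) (use Mge lt in auto)
        have bpow: "b powr (\<beta>-1) \<le> Pw"
        proof -
          have "b powr (\<beta>-1) = b powr (-(1-\<beta>))" by simp
          also have "\<dots> = 1 / b powr (1-\<beta>)" by (rule powr_minus_divide)
          also have "\<dots> = (1/b) powr (1-\<beta>)" by (simp add: powr_divide)
          also have "\<dots> \<le> M powr (1-\<beta>)"
          proof (rule powr_mono2)
            show "1/b \<le> M" using Mge by (simp add: b_def)
          qed (use lt bp in auto)
          finally show ?thesis unfolding Pw_def .
        qed
        have n2: "0 \<le> 3*C0 * b powr (\<beta>-1) / (1-\<beta>)" using C0nn lt by simp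
        have "4 + 3*C0 * b powr (\<beta>-1) / (1-\<beta>) \<le> C0 * R"
        proof -
          have "R = (4 + 3/(1-\<beta>)) * Pw" using lt by (simp add: R_def C_def Pw_def)
          then have r: "C0 * R = 4*(C0*Pw) + 3*(C0*Pw)/(1-\<beta>)" by (simp add: algebra_simps)
          have "1 * 1 \<le> C0 * Pw" using C0ge Pg by (intro mult_mono) auto
          moreover have "3*C0 * b powr (\<beta>-1) / (1-\<beta>) \<le> 3*(C0*Pw) / (1-\<beta>)"
            using lt C0nn bpow by (intro divide_right_mono) (auto intro: mult_left_mono)
          ultimately show ?thesis unfolding r by linarith
        qed
        then have "ennreal (4 + 3*C0 * b powr (\<beta>-1) / (1-\<beta>)) \<le> ennreal (C0 * R)" by (rule ennreal_leI)
        moreover have "ennreal 4 + ennreal (3*C0 * b powr (\<beta>-1) / (1-\<beta>)) = ennreal (4 + 3*C0 * b powr (\<beta>-1) / (1-\<beta>))"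
          using n2 by (simp add: ennreal_plus)
        ultimately have E: "ennreal 4 + ennreal (3*C0 * b powr (\<beta>-1) / (1-\<beta>)) \<le> ennreal (C0 * R)" by simp
        have "(\<integral>\<^sup>+\<mu>. ennreal (fI \<delta> T \<mu>) \<partial>\<Gamma>) \<le> ennreal 4 + ennreal (3*C0 * b powr (\<beta>-1) / (1-\<beta>))"
          using key2 I by (rule order.trans[OF _ add_left_mono])
        then show ?thesis using E by (rule order.trans)
      qed
    qed
    have "(\<integral>\<mu>. fI \<delta> T \<mu> \<partial>\<Gamma>) \<le> C0 * R"
      by (rule integral_real_bounded) (use Rnn C0ge main in auto)
    then show "(\<integral>\<mu>. indicator {..<1 - 3 * \<delta>} \<mu> *
           min (1 + 1 / (1 - 2 * \<delta> - \<mu>)) (real T * (1 - \<mu>)) \<partial>\<Gamma>)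
    \<le> C0 * (if \<beta> = 1 then 5 + ln (1 / \<delta>)
             else if \<beta> > 1 then C
             else C * min (sqrt (real T)) (1 / \<delta>) powr (1 - \<beta>))"
      unfolding fI_def R_def M_def .
  qed
qed

end
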